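(* Let $\Gamma(V,E)$ be a finite undirected simple graph, let $V_1$ be the set of vertices of degree at least $1$, let $\Gamma^{(0)}=\Gamma(V\setminus V_1)$ be the induced subgraph on the isolated vertices, and let $\Gamma^{(1)},\dots,\Gamma^{(k)}$ be the connected components of the induced subgraph $\Gamma(V_1)$. For $i=0,1,\dots,k$ let $H^{(i)}=G_{\Gamma^{(i)}}\gamma_2(G_\Gamma)$, i.e. the subgroup of $G_\Gamma$ consisting of the elements $\prod_j (x^{(i)}_j)^{z_j}\prod_{l=1}^N y_l^{t_l}$ with $z_j,t_l\in\mathbb{Z}$, where $x^{(i)}_j$ runs over the vertices of $\Gamma^{(i)}$. Then for every automorphism $\varphi$ of $G_\Gamma$ there exists a unique permutation $\sigma\in S_k$ such that (i) $\varphi(H^{(i)})=H^{(\sigma(i))}$ for all $i=1,\dots,k$, and (ii) $\Gamma^{(i)}\cong\Gamma^{(\sigma(i))}$ for all $i=1,\dots,k$.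
   Context: For a finite undirected simple graph $\Gamma$ with vertex set $\{x_1,\dots,x_n\}$ and edge set $E$, the group $G_\Gamma$ is defined by the presentation with generators $x_1,\dots,x_n$ and $y_{i,j}$ for each pair $i<j$ with $x_ix_j\notin E$, and relations $[x_j,x_i]=1$ if $x_ix_j\in E$; $[x_j,x_i]=y_{i,j}$ if $x_ix_j\notin E$ and $i<j$; and $[x_l,y_{i,j}]=1$ for all $l$ and all such $y_{i,j}$. $N$ is the number of non-adjacent pairs, the $y_{i,j}$ are enumerated $y_1,\dots,y_N$, and $\gamma_2(G_\Gamma)=[G_\Gamma,G_\Gamma]$ is generated by them. $\Gamma(V')$ denotes the induced subgraph on $V'$, and for a subgraph $\Gamma'$ of $\Gamma$, $G_{\Gamma'}$ is viewed as the subgroup of $G_\Gamma$ generated by the vertices of $\Gamma'$. *)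

theory Defs
  imports "HOL-Combinatorics.Permutations" "HOL-Algebra.Group"
begin

text \<open>Finite simple graph on the vertex set {0..<n} (vertex x_{i+1} is i).\<close>
definition simple_graph :: "nat \<Rightarrow> (nat \<Rightarrow> nat \<Rightarrow> bool) \<Rightarrow> bool" where
  "simple_graph n E \<longleftrightarrow> (\<forall>u v. E u v \<longrightarrow> u < n \<and> v < n)
      \<and> (\<forall>u v. E u v \<longleftrightarrow> E v u) \<and> (\<forall>u. \<not> E u u)"

text \<open>Non-adjacent pairs (i,j), i<j: the indices of the generators y_{i,j}.\<close>
definition nonedges :: "nat \<Rightarrow> (nat \<Rightarrow> nat \<Rightarrow> bool) \<Rightarrow> (nat \<times> nat) set" where
  "nonedges n E = {(i, j). i < j \<and> j < n \<and> \<not> E i j}"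

text \<open>The group G_Gamma in normal form: the pair (z,t) stands for
  x_0^{z_0} ... x_{n-1}^{z_{n-1}} * prod y_{ij}^{t(i,j)}.  Multiplication follows from
  x_j x_i = x_i x_j y_{ij} (i<j, non-adjacent) with the y_{ij} central.\<close>
definition G_mult :: "nat \<Rightarrow> (nat \<Rightarrow> nat \<Rightarrow> bool) \<Rightarrow> (nat \<Rightarrow> int) \<times> (nat \<times> nat \<Rightarrow> int)
    \<Rightarrow> (nat \<Rightarrow> int) \<times> (nat \<times> nat \<Rightarrow> int) \<Rightarrow> (nat \<Rightarrow> int) \<times> (nat \<times> nat \<Rightarrow> int)" where
  "G_mult n E a b = (\<lambda>j. fst a j + fst b j,
     \<lambda>p. snd a p + snd b p + (if p \<in> nonedges n E then fst a (snd p) * fst b (fst p) else 0))"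

definition G_Gamma :: "nat \<Rightarrow> (nat \<Rightarrow> nat \<Rightarrow> bool) \<Rightarrow> ((nat \<Rightarrow> int) \<times> (nat \<times> nat \<Rightarrow> int)) monoid" where
  "G_Gamma n E = \<lparr> carrier = {a. (\<forall>j. n \<le> j \<longrightarrow> fst a j = 0) \<and> (\<forall>p. p \<notin> nonedges n E \<longrightarrow> snd a p = 0)},
     mult = G_mult n E, one = (\<lambda>_. 0, \<lambda>_. 0) \<rparr>"

definition V1 :: "nat \<Rightarrow> (nat \<Rightarrow> nat \<Rightarrow> bool) \<Rightarrow> nat set" where
  "V1 n E = {v. v < n \<and> (\<exists>u. E u v)}"

definition comp_of :: "nat \<Rightarrow> (nat \<Rightarrow> nat \<Rightarrow> bool) \<Rightarrow> nat \<Rightarrow> nat set" where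
  "comp_of n E v = {u \<in> V1 n E. (\<lambda>a b. a \<in> V1 n E \<and> b \<in> V1 n E \<and> E a b)\<^sup>*\<^sup>* v u}"

definition components :: "nat \<Rightarrow> (nat \<Rightarrow> nat \<Rightarrow> bool) \<Rightarrow> nat set set" where
  "components n E = comp_of n E ` V1 n E"

definition induced_iso :: "(nat \<Rightarrow> nat \<Rightarrow> bool) \<Rightarrow> nat set \<Rightarrow> nat set \<Rightarrow> bool" where
  "induced_iso E A B \<longleftrightarrow> (\<exists>f. bij_betw f A B \<and> (\<forall>u\<in>A. \<forall>v\<in>A. E u v \<longleftrightarrow> E (f u) (f v)))"

definition H_sub :: "nat \<Rightarrow> (nat \<Rightarrow> nat \<Rightarrow> bool) \<Rightarrow> nat set \<Rightarrow> ((nat \<Rightarrow> int) \<times> (nat \<times> nat \<Rightarrow> int)) set" where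
  "H_sub n E C = {a \<in> carrier (G_Gamma n E). \<forall>j. fst a j \<noteq> 0 \<longrightarrow> j \<in> C}"

end

theory Submission
  imports Defs Complex_Main
begin

definition invp :: "nat set \<Rightarrow> nat set \<Rightarrow> (nat \<Rightarrow> nat \<Rightarrow> rat) \<Rightarrow> (nat \<Rightarrow> nat \<Rightarrow> rat) \<Rightarrow> bool" where
  "invp R C A B \<longleftrightarrow> (\<forall>i\<in>R. \<forall>l\<in>R. (\<Sum>k\<in>C. A i k * B k l) = (if i = l then 1 else 0)) \<and>
                   (\<forall>j\<in>C. \<forall>l\<in>C. (\<Sum>k\<in>R. B j k * A k l) = (if j = l then 1 else 0))"

lemma invp_sym: "invp R C A B = invp C R B A"
  unfolding invp_def by auto

definition schur :: "(nat \<Rightarrow> nat \<Rightarrow> rat) \<Rightarrow> nat \<Rightarrow> nat \<Rightarrow> nat \<Rightarrow> nat \<Rightarrow> rat" where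
  "schur A i j = (\<lambda>r x. A r x - A r j * A i x * inverse (A i j))"

lemma schur_inv:
  assumes inv: "invp R C A B" and fR: "finite R" and fC: "finite C"
    and iR: "i \<in> R" and jC: "j \<in> C" and nz: "A i j \<noteq> 0"
  shows "invp (R - {i}) (C - {j}) (schur A i j) B"
proof -
  have I1: "\<And>r l. r \<in> R \<Longrightarrow> l \<in> R \<Longrightarrow> (\<Sum>k\<in>C. A r k * B k l) = (if r = l then 1 else 0)"
    using inv unfolding invp_def by auto
  have I2: "\<And>x l. x \<in> C \<Longrightarrow> l \<in> C \<Longrightarrow> (\<Sum>k\<in>R. B x k * A k l) = (if x = l then 1 else 0)"
    using inv unfolding invp_def by auto
  have P1: "(\<Sum>x\<in>C - {j}. schur A i j r x * B x y) = (if r = y then 1 else 0)"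
    if r: "r \<in> R - {i}" and y: "y \<in> R - {i}" for r y
  proof -
    have e: "\<And>x. schur A i j r x * B x y = A r x * B x y - A r j * inverse (A i j) * (A i x * B x y)"
      unfolding schur_def by (simp add: ring_distribs mult_ac)
    have s1: "(\<Sum>x\<in>C - {j}. A r x * B x y) = (if r = y then 1 else 0) - A r j * B j y"
      using I1[of r y] r y jC fC by (simp add: sum_diff1)
    have s2: "(\<Sum>x\<in>C - {j}. A i x * B x y) = 0 - A i j * B j y"
      using I1[of i y] iR y jC fC by (simp add: sum_diff1)
    have "(\<Sum>x\<in>C - {j}. schur A i j r x * B x y)
        = (\<Sum>x\<in>C - {j}. A r x * B x y) - A r j * inverse (A i j) * (\<Sum>x\<in>C - {j}. A i x * B x y)"
      unfolding e by (simp add: sum_subtractf sum_distrib_left)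
    also have "\<dots> = (if r = y then 1 else 0)"
      unfolding s1 s2 using nz by (simp add: ring_distribs mult_ac)
    finally show ?thesis .
  qed
  have P2: "(\<Sum>y\<in>R - {i}. B x y * schur A i j y l) = (if x = l then 1 else 0)"
    if x: "x \<in> C - {j}" and l: "l \<in> C - {j}" for x l
  proof -
    have e: "\<And>y. B x y * schur A i j y l = B x y * A y l - A i l * inverse (A i j) * (B x y * A y j)"
      unfolding schur_def by (simp add: ring_distribs mult_ac)
    have s1: "(\<Sum>y\<in>R - {i}. B x y * A y l) = (if x = l then 1 else 0) - B x i * A i l"
      using I2[of x l] x l iR fR by (simp add: sum_diff1)
    have s2: "(\<Sum>y\<in>R - {i}. B x y * A y j) = 0 - B x i * A i j"
      using I2[of x j] x jC iR fR by (simp add: sum_diff1)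
    have "(\<Sum>y\<in>R - {i}. B x y * schur A i j y l)
        = (\<Sum>y\<in>R - {i}. B x y * A y l) - A i l * inverse (A i j) * (\<Sum>y\<in>R - {i}. B x y * A y j)"
      unfolding e by (simp add: sum_subtractf sum_distrib_left)
    also have "\<dots> = (if x = l then 1 else 0)"
      unfolding s1 s2 using nz by (simp add: ring_distribs mult_ac)
    finally show ?thesis .
  qed
  show ?thesis unfolding invp_def
  proof (intro conjI ballI)
    fix r y assume "r \<in> R - {i}" "y \<in> R - {i}"
    then show "(\<Sum>x\<in>C - {j}. schur A i j r x * B x y) = (if r = y then 1 else 0)" by (rule P1)
  next
    fix x l assume "x \<in> C - {j}" "l \<in> C - {j}"
    then show "(\<Sum>y\<in>R - {i}. B x y * schur A i j y l) = (if x = l then 1 else 0)" by (rule P2)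
  qed
qed

lemma sub_inv:
  assumes inv: "invp R C A B" and fR: "finite R" and fC: "finite C"
    and iR: "i \<in> R" and jC: "j \<in> C" and nz: "B j i \<noteq> 0"
  shows "invp (R - {i}) (C - {j}) A (schur B j i)"
proof -
  have inv': "invp C R B A" using inv by (subst invp_sym)
  show ?thesis by (subst invp_sym) (rule schur_inv[OF inv' fC fR jC iR nz])
qed

lemma invp_pivot:
  assumes inv: "invp R C A B" and jC: "j \<in> C"
  shows "\<exists>i\<in>R. A i j \<noteq> 0 \<and> B j i \<noteq> 0"
proof (rule ccontr)
  assume "\<not> ?thesis"
  then have "(\<Sum>k\<in>R. B j k * A k j) = 0" by (intro sum.neutral) auto
  moreover have "(\<Sum>k\<in>R. B j k * A k j) = 1" using inv jC unfolding invp_def by auto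
  ultimately show False by simp
qed

lemma invp_empty: assumes "invp R {} A B" shows "R = {}"
proof (rule ccontr)
  assume "R \<noteq> {}"
  then obtain x where "x \<in> R" by auto
  then have "(\<Sum>k\<in>{}. A x k * B k x) = (if x = x then 1 else (0::rat))"
    using assms unfolding invp_def by blast
  then show False by simp
qed

lemma bij_ext:
  assumes "bij_betw \<sigma> F (R - {i})" "x \<notin> F" "i \<in> R"
  shows "bij_betw (\<sigma>(x := i)) (insert x F) R"
proof -
  have "\<And>a. a \<in> F \<Longrightarrow> (\<sigma>(x := i)) a = \<sigma> a" using assms(2) by auto
  then have "bij_betw (\<sigma>(x := i)) F (R - {i}) = bij_betw \<sigma> F (R - {i})"
    by (rule bij_betw_cong)
  then have b: "bij_betw (\<sigma>(x := i)) F (R - {i})" using assms(1) by simp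
  have "(\<sigma>(x := i)) x \<notin> R - {i}" by simp
  then have "bij_betw (\<sigma>(x := i)) (F \<union> {x}) ((R - {i}) \<union> {(\<sigma>(x := i)) x})"
    using notIn_Un_bij_betw[OF assms(2) _ b] by blast
  moreover have "(R - {i}) \<union> {(\<sigma>(x := i)) x} = R" using assms(3) by auto
  ultimately show ?thesis by simp
qed

lemma supp_perm:
  assumes "finite C" "finite R" "invp R C A B"
  shows "\<exists>\<pi>. bij_betw \<pi> C R \<and> (\<forall>j\<in>C. A (\<pi> j) j \<noteq> 0)"
  using assms
proof (induct C arbitrary: R B rule: finite_induct)
  case empty
  then have "R = {}" using invp_empty by blast
  then show ?case by (auto simp: bij_betw_def)
next
  case (insert x F)
  obtain i where i: "i \<in> R" "A i x \<noteq> 0" "B x i \<noteq> 0"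
    using invp_pivot[OF insert(5)] by auto
  have "invp (R - {i}) (insert x F - {x}) A (schur B x i)"
    using sub_inv[OF insert(5) insert(4) _ i(1), of x] i(3) insert(1) by auto
  then have "invp (R - {i}) F A (schur B x i)" using insert(2) by simp
  moreover have "finite (R - {i})" using insert(4) by simp
  ultimately obtain \<sigma> where s: "bij_betw \<sigma> F (R - {i})" "\<forall>j\<in>F. A (\<sigma> j) j \<noteq> 0"
    using insert.hyps(3) by blast
  show ?case
  proof (intro exI conjI)
    show "bij_betw (\<sigma>(x := i)) (insert x F) R" by (rule bij_ext[OF s(1) insert(2) i(1)])
    show "\<forall>j\<in>insert x F. A ((\<sigma>(x := i)) j) j \<noteq> 0" using s(2) insert(2) i by auto
  qed
qed

definition Pcond :: "(nat \<Rightarrow> nat \<Rightarrow> bool) \<Rightarrow> nat set \<Rightarrow> nat set \<Rightarrow> (nat \<Rightarrow> nat \<Rightarrow> rat) \<Rightarrow> bool" where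
  "Pcond E C R A \<longleftrightarrow> (\<forall>u\<in>C. \<forall>v\<in>C. E u v \<longrightarrow>
      (\<forall>a\<in>R. \<forall>b\<in>R. a \<noteq> b \<longrightarrow> \<not> E a b \<longrightarrow> A a u * A b v = A a v * A b u))"

definition nbr :: "(nat \<Rightarrow> nat \<Rightarrow> bool) \<Rightarrow> nat set \<Rightarrow> nat \<Rightarrow> nat set" where
  "nbr E S x = {w \<in> S. E x w}"

definition ecnt :: "(nat \<Rightarrow> nat \<Rightarrow> bool) \<Rightarrow> nat set \<Rightarrow> nat" where
  "ecnt E S = card {p \<in> S \<times> S. E (fst p) (snd p)}"

lemma Pcond_mono: "Pcond E C R A \<Longrightarrow> C' \<subseteq> C \<Longrightarrow> R' \<subseteq> R \<Longrightarrow> Pcond E C' R' A"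
  unfolding Pcond_def by blast

lemma degD:
  assumes fC: "finite C" and fR: "finite R" and inv: "invp R C A B" and P: "Pcond E C R A"
    and irr: "\<And>x. \<not> E x x" and iR: "i \<in> R" and jC: "j \<in> C" and nz: "A i j \<noteq> 0"
  shows "card (nbr E C j) \<le> card (nbr E R i)"
proof -
  have inv': "invp (R - {i}) (C - {j}) (schur A i j) B"
    by (rule schur_inv[OF inv fR fC iR jC nz])
  obtain \<tau> where t: "bij_betw \<tau> (C - {j}) (R - {i})" "\<forall>w\<in>C - {j}. schur A i j (\<tau> w) w \<noteq> 0"
    using supp_perm[OF _ _ inv'] fC fR by auto
  have sub: "nbr E C j \<subseteq> C - {j}" using irr unfolding nbr_def by auto
  have img: "\<tau> ` nbr E C j \<subseteq> nbr E R i"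
  proof
    fix b assume "b \<in> \<tau> ` nbr E C j"
    then obtain w where w: "w \<in> nbr E C j" "b = \<tau> w" by auto
    have wC: "w \<in> C - {j}" using w(1) sub by auto
    have bR: "b \<in> R - {i}" using t(1) wC w(2) by (auto simp: bij_betw_def)
    have Ejw: "E j w" using w(1) unfolding nbr_def by auto
    show "b \<in> nbr E R i"
    proof (rule ccontr)
      assume "b \<notin> nbr E R i"
      then have nE: "\<not> E i b" using bR unfolding nbr_def by auto
      have eq: "A i j * A b w = A i w * A b j"
        using P jC wC iR bR Ejw nE unfolding Pcond_def by auto
      have "schur A i j b w = A b w - A b j * A i w * inverse (A i j)" unfolding schur_def by simp
      also have "A b j * A i w * inverse (A i j) = (A i j * A b w) * inverse (A i j)"
        using eq by (simp add: mult_ac)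
      also have "\<dots> = A b w" using nz by simp
      finally have "schur A i j b w = 0" by simp
      then show False using t(2) wC w(2) by auto
    qed
  qed
  have inj: "inj_on \<tau> (nbr E C j)"
    using t(1) sub unfolding bij_betw_def by (auto intro: inj_on_subset)
  have "card (\<tau> ` nbr E C j) \<le> card (nbr E R i)"
    by (rule card_mono) (use fR img in \<open>auto simp: nbr_def\<close>)
  then show ?thesis using card_image[OF inj] by simp
qed

lemma ecnt_remove:
  assumes fS: "finite S" and jS: "j \<in> S" and irr: "\<And>x. \<not> E x x" and sym: "\<And>x y. E x y \<Longrightarrow> E y x"
  shows "ecnt E S = ecnt E (S - {j}) + 2 * card (nbr E S j)"
proof -
  let ?X = "{p \<in> S \<times> S. E (fst p) (snd p)}"
  let ?X1 = "{p \<in> (S - {j}) \<times> (S - {j}). E (fst p) (snd p)}"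
  let ?X2 = "Pair j ` nbr E S j"
  let ?X3 = "(\<lambda>w. (w, j)) ` nbr E S j"
  have m2: "p \<in> ?X2 \<longleftrightarrow> fst p = j \<and> snd p \<in> S \<and> E j (snd p)" for p
    by (cases p) (auto simp: nbr_def)
  have m3: "p \<in> ?X3 \<longleftrightarrow> snd p = j \<and> fst p \<in> S \<and> E j (fst p)" for p
    by (cases p) (auto simp: nbr_def)
  have XU: "?X = ?X1 \<union> (?X2 \<union> ?X3)"
  proof (rule Set.set_eqI)
    fix p :: "nat \<times> nat"
    obtain a b where p: "p = (a, b)" by (cases p)
    have "p \<in> ?X \<longleftrightarrow> a \<in> S \<and> b \<in> S \<and> E a b" using p by simp
    moreover have "p \<in> ?X1 \<longleftrightarrow> a \<in> S \<and> a \<noteq> j \<and> b \<in> S \<and> b \<noteq> j \<and> E a b" using p by auto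
    moreover have "p \<in> ?X2 \<longleftrightarrow> a = j \<and> b \<in> S \<and> E j b" using p m2 by simp
    moreover have "p \<in> ?X3 \<longleftrightarrow> b = j \<and> a \<in> S \<and> E j a" using p m3 by simp
    moreover have "a \<in> S \<and> b \<in> S \<and> E a b \<longleftrightarrow>
        (a \<in> S \<and> a \<noteq> j \<and> b \<in> S \<and> b \<noteq> j \<and> E a b) \<or> (a = j \<and> b \<in> S \<and> E j b) \<or> (b = j \<and> a \<in> S \<and> E j a)"
    proof (cases "a = j")
      case True
      then show ?thesis using jS by auto
    next
      case False
      then show ?thesis using sym[of a b] sym[of b a] jS by auto
    qed
    ultimately show "p \<in> ?X \<longleftrightarrow> p \<in> ?X1 \<union> (?X2 \<union> ?X3)" by simp
  qed
  have fin: "finite ?X1" "finite ?X2" "finite ?X3" using fS by (auto simp: nbr_def)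
  have d1: "?X1 \<inter> (?X2 \<union> ?X3) = {}" by auto
  have d2: "?X2 \<inter> ?X3 = {}" using irr by (auto simp: nbr_def)
  have c2: "card ?X2 = card (nbr E S j)" by (rule card_image) (auto intro: inj_onI)
  have c3: "card ?X3 = card (nbr E S j)" by (rule card_image) (auto intro: inj_onI)
  have "card ?X = card ?X1 + (card ?X2 + card ?X3)"
    unfolding XU using fin d1 d2 by (simp add: card_Un_disjoint)
  then show ?thesis unfolding ecnt_def using c2 c3 by simp
qed

lemma nbr_insert_self:
  assumes "x \<notin> F" "w \<in> F" "E w x"
  shows "nbr E (insert x F) w = insert x (nbr E F w)" "x \<notin> nbr E F w"
  using assms unfolding nbr_def by auto

lemma graph_iso:
  assumes "finite C" "finite R" "invp R C A B" "Pcond E C R A"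
    and irr: "\<And>x. \<not> E x x" and sym: "\<And>x y. E x y \<Longrightarrow> E y x"
  shows "ecnt E C \<le> ecnt E R \<and> (ecnt E C = ecnt E R \<longrightarrow>
           (\<exists>\<pi>. bij_betw \<pi> C R \<and> (\<forall>j\<in>C. A (\<pi> j) j \<noteq> 0) \<and> (\<forall>u\<in>C. \<forall>v\<in>C. E u v \<longleftrightarrow> E (\<pi> u) (\<pi> v))))"
  using assms(1-4)
proof (induct C arbitrary: R B rule: finite_induct)
  case empty
  then have "R = {}" using invp_empty by blast
  then show ?case by (auto simp: bij_betw_def ecnt_def)
next
  case (insert x F)
  note fF = insert(1) and xF = insert(2) and IH = insert(3) and fR = insert(4)
    and inv = insert(5) and P = insert(6)
  have fC: "finite (insert x F)" using fF by simp
  obtain i where i: "i \<in> R" "A i x \<noteq> 0" "B x i \<noteq> 0"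
    using invp_pivot[OF inv] by auto
  have inv1: "invp (R - {i}) (insert x F - {x}) A (schur B x i)"
    using sub_inv[OF inv fR fC i(1) _ i(3)] by simp
  then have inv2: "invp (R - {i}) F A (schur B x i)" using xF by simp
  have P2: "Pcond E F (R - {i}) A" using Pcond_mono[OF P] by blast
  have fRi: "finite (R - {i})" using fR by simp
  note IH2 = IH[OF fRi inv2 P2]
  have dg: "card (nbr E (insert x F) x) \<le> card (nbr E R i)"
    by (rule degD[where E=E, OF fC fR inv P irr i(1) _ i(2)]) simp
  have eC: "ecnt E (insert x F) = ecnt E F + 2 * card (nbr E (insert x F) x)"
    using ecnt_remove[where E=E, OF fC insertI1 irr sym] xF by simp
  have eR: "ecnt E R = ecnt E (R - {i}) + 2 * card (nbr E R i)"
    using ecnt_remove[where E=E, OF fR i(1) irr sym] .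
  show ?case
  proof
    show "ecnt E (insert x F) \<le> ecnt E R" using eC eR dg IH2 by linarith
    show "ecnt E (insert x F) = ecnt E R \<longrightarrow>
           (\<exists>\<pi>. bij_betw \<pi> (insert x F) R \<and> (\<forall>j\<in>insert x F. A (\<pi> j) j \<noteq> 0) \<and>
              (\<forall>u\<in>insert x F. \<forall>v\<in>insert x F. E u v \<longleftrightarrow> E (\<pi> u) (\<pi> v)))"
    proof
      assume eq: "ecnt E (insert x F) = ecnt E R"
      have eqF: "ecnt E F = ecnt E (R - {i})" and eqd: "card (nbr E (insert x F) x) = card (nbr E R i)"
        using eC eR dg IH2 eq by linarith+
      obtain \<sigma> where s: "bij_betw \<sigma> F (R - {i})" "\<forall>j\<in>F. A (\<sigma> j) j \<noteq> 0"
        "\<forall>u\<in>F. \<forall>v\<in>F. E u v \<longleftrightarrow> E (\<sigma> u) (\<sigma> v)"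
        using IH2 eqF by blast
      define \<pi> where "\<pi> = \<sigma>(x := i)"
      have bij: "bij_betw \<pi> (insert x F) R" unfolding \<pi>_def by (rule bij_ext[OF s(1) xF i(1)])
      have sup: "\<forall>j\<in>insert x F. A (\<pi> j) j \<noteq> 0" using s(2) xF i(2) unfolding \<pi>_def by auto
      have sF: "\<And>w. w \<in> F \<Longrightarrow> \<sigma> w \<in> R - {i}" using s(1) by (auto simp: bij_betw_def)
      have injs: "inj_on \<sigma> F" using s(1) by (auto simp: bij_betw_def)
      have nbimg: "\<sigma> ` nbr E F w = nbr E (R - {i}) (\<sigma> w)" if wF: "w \<in> F" for w
      proof
        show "\<sigma> ` nbr E F w \<subseteq> nbr E (R - {i}) (\<sigma> w)"
          using s(3) wF sF unfolding nbr_def by auto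
        show "nbr E (R - {i}) (\<sigma> w) \<subseteq> \<sigma> ` nbr E F w"
        proof
          fix b assume b: "b \<in> nbr E (R - {i}) (\<sigma> w)"
          then have "b \<in> \<sigma> ` F" using s(1) unfolding nbr_def bij_betw_def by auto
          then obtain v where v: "v \<in> F" "b = \<sigma> v" by auto
          then have "E w v" using s(3) wF b unfolding nbr_def by auto
          then show "b \<in> \<sigma> ` nbr E F w" using v unfolding nbr_def by auto
        qed
      qed
      have cardnb: "card (nbr E F w) = card (nbr E (R - {i}) (\<sigma> w))" if wF: "w \<in> F" for w
      proof -
        have "inj_on \<sigma> (nbr E F w)" using injs by (rule inj_on_subset) (auto simp: nbr_def)
        then show ?thesis using card_image nbimg[OF wF] by metis
      qed
      have fwd: "E i (\<sigma> w)" if wF: "w \<in> F" and E: "E x w" for w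
      proof (rule ccontr)
        assume nE: "\<not> E i (\<sigma> w)"
        have "nbr E R (\<sigma> w) = nbr E (R - {i}) (\<sigma> w)"
          using nE sym unfolding nbr_def by auto
        moreover have "nbr E (insert x F) w = insert x (nbr E F w)" "x \<notin> nbr E F w"
          using nbr_insert_self[where E=E, OF xF wF sym[OF E]] by auto
        moreover have "finite (nbr E F w)" using fF by (simp add: nbr_def)
        moreover have "card (nbr E (insert x F) w) \<le> card (nbr E R (\<pi> w))"
          by (rule degD[where E=E, OF fC fR inv P irr]) (use bij wF sup in \<open>auto simp: bij_betw_def\<close>)
        moreover have "\<pi> w = \<sigma> w" using wF xF unfolding \<pi>_def by auto
        ultimately show False using cardnb[OF wF] by simp
      qed
      have nbx: "nbr E (insert x F) x \<subseteq> F" using irr unfolding nbr_def by auto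
      have imgx: "\<sigma> ` nbr E (insert x F) x = nbr E R i"
      proof (rule card_subset_eq)
        show "finite (nbr E R i)" using fR by (simp add: nbr_def)
        show "\<sigma> ` nbr E (insert x F) x \<subseteq> nbr E R i"
          using fwd nbx sF unfolding nbr_def by auto
        have "inj_on \<sigma> (nbr E (insert x F) x)" using injs nbx by (rule inj_on_subset)
        then show "card (\<sigma> ` nbr E (insert x F) x) = card (nbr E R i)"
          using card_image eqd by metis
      qed
      have key: "E x w \<longleftrightarrow> E i (\<sigma> w)" if wF: "w \<in> F" for w
      proof
        assume "E x w" then show "E i (\<sigma> w)" using fwd wF by blast
      next
        assume "E i (\<sigma> w)"
        then have "\<sigma> w \<in> nbr E R i" using sF[OF wF] unfolding nbr_def by auto
        then have "\<sigma> w \<in> \<sigma> ` nbr E (insert x F) x" using imgx by simp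
        then obtain w' where w': "w' \<in> nbr E (insert x F) x" "\<sigma> w' = \<sigma> w" by (auto simp del: imgx)
        then have "w' = w" using injs wF nbx unfolding inj_on_def by blast
        then show "E x w" using w' unfolding nbr_def by auto
      qed
      have iso: "\<forall>u\<in>insert x F. \<forall>v\<in>insert x F. E u v \<longleftrightarrow> E (\<pi> u) (\<pi> v)"
      proof (intro ballI)
        fix u v assume u: "u \<in> insert x F" and v: "v \<in> insert x F"
        show "E u v \<longleftrightarrow> E (\<pi> u) (\<pi> v)"
        proof (cases "u = x")
          case True
          then show ?thesis
          proof (cases "v = x")
            case True
            then show ?thesis using \<open>u = x\<close> irr by simp
          next
            case False
            then have "v \<in> F" using v by simp
            then show ?thesis using key \<open>u = x\<close> xF unfolding \<pi>_def by auto
          qed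
        next
          case False
          then have uF: "u \<in> F" using u by simp
          show ?thesis
          proof (cases "v = x")
            case True
            have "E u x \<longleftrightarrow> E x u" using sym by blast
            moreover have "E i (\<sigma> u) \<longleftrightarrow> E (\<sigma> u) i" using sym by blast
            ultimately show ?thesis using key[OF uF] True \<open>u \<noteq> x\<close> unfolding \<pi>_def by auto
          next
            case False
            then have "v \<in> F" using v by simp
            then show ?thesis using s(3) uF \<open>u \<noteq> x\<close> False unfolding \<pi>_def by auto
          qed
        qed
      qed
      show "\<exists>\<pi>. bij_betw \<pi> (insert x F) R \<and> (\<forall>j\<in>insert x F. A (\<pi> j) j \<noteq> 0) \<and>
              (\<forall>u\<in>insert x F. \<forall>v\<in>insert x F. E u v \<longleftrightarrow> E (\<pi> u) (\<pi> v))"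
        using bij sup iso by blast
    qed
  qed
qed


type_synonym elt = "(nat \<Rightarrow> int) \<times> (nat \<times> nat \<Rightarrow> int)"

definition dl :: "nat \<Rightarrow> nat \<Rightarrow> int" where "dl k = (\<lambda>j. if j = k then 1 else 0)"
definition Zn :: "nat \<Rightarrow> (nat \<Rightarrow> int) set" where "Zn n = {z. \<forall>j. n \<le> j \<longrightarrow> z j = 0}"
definition Lm :: "(elt \<Rightarrow> elt) \<Rightarrow> (nat \<Rightarrow> int) \<Rightarrow> nat \<Rightarrow> int" where
  "Lm f z = fst (f (z, \<lambda>_. 0))"
definition Mx :: "(elt \<Rightarrow> elt) \<Rightarrow> nat \<Rightarrow> nat \<Rightarrow> int" where
  "Mx f a u = Lm f (dl u) a"

lemma carrier_iff: "x \<in> carrier (G_Gamma n E) \<longleftrightarrow> fst x \<in> Zn n \<and> (\<forall>p. p \<notin> nonedges n E \<longrightarrow> snd x p = 0)"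
  by (simp add: G_Gamma_def Zn_def)

lemma mult_eq: "x \<otimes>\<^bsub>G_Gamma n E\<^esub> y = G_mult n E x y"
  by (simp add: G_Gamma_def)

lemma hom_mult:
  assumes "f \<in> hom (G_Gamma n E) (G_Gamma n E)" "a \<in> carrier (G_Gamma n E)" "b \<in> carrier (G_Gamma n E)"
  shows "f (G_mult n E a b) = G_mult n E (f a) (f b)"
  using assms unfolding hom_def by (simp add: mult_eq)

lemma hom_carrier:
  assumes "f \<in> hom (G_Gamma n E) (G_Gamma n E)" "a \<in> carrier (G_Gamma n E)"
  shows "f a \<in> carrier (G_Gamma n E)"
  using assms unfolding hom_def by auto

lemma Fadd:
  assumes "f \<in> hom (G_Gamma n E) (G_Gamma n E)" "a \<in> carrier (G_Gamma n E)" "b \<in> carrier (G_Gamma n E)"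
  shows "fst (f (G_mult n E a b)) j = fst (f a) j + fst (f b) j"
  using hom_mult[OF assms] unfolding G_mult_def by simp

lemma nonedges_lt: "p \<in> nonedges n E \<Longrightarrow> fst p < snd p \<and> snd p < n"
  unfolding nonedges_def by auto

lemma Gm_z0: "G_mult n E (z, \<lambda>_. 0) ((\<lambda>_. 0), t) = (z, t)"
  unfolding G_mult_def by (simp add: fun_eq_iff)

lemma Gm_00: "G_mult n E ((\<lambda>_. 0), s) ((\<lambda>_. 0), t) = ((\<lambda>_. 0), \<lambda>p. s p + t p)"
  unfolding G_mult_def by (simp add: fun_eq_iff)

lemma Gm_xy: "G_mult n E (x, \<lambda>_. 0) (y, \<lambda>_. 0) =
   (\<lambda>j. x j + y j, \<lambda>p. if p \<in> nonedges n E then x (snd p) * y (fst p) else 0)"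
  unfolding G_mult_def by (simp add: fun_eq_iff)

lemma F00:
  assumes f: "f \<in> hom (G_Gamma n E) (G_Gamma n E)"
  shows "fst (f ((\<lambda>_. 0), (\<lambda>_. 0))) j = 0"
proof -
  have c: "((\<lambda>_. 0), (\<lambda>_. 0)) \<in> carrier (G_Gamma n E)" by (simp add: carrier_iff Zn_def)
  have "fst (f (G_mult n E ((\<lambda>_. 0), (\<lambda>_. 0)) ((\<lambda>_. 0), (\<lambda>_. 0)))) j
        = fst (f ((\<lambda>_. 0), (\<lambda>_. 0))) j + fst (f ((\<lambda>_. 0), (\<lambda>_. 0))) j"
    by (rule Fadd[OF f c c])
  then show ?thesis by (simp add: Gm_00)
qed

lemma F0e:
  assumes f: "f \<in> hom (G_Gamma n E) (G_Gamma n E)" and p: "p \<in> nonedges n E"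
  shows "fst (f ((\<lambda>_. 0), (\<lambda>q. if q = p then m else 0))) j = 0"
proof -
  obtain a b where ab: "p = (a, b)" by (cases p)
  have ab2: "a < b" "b < n" using nonedges_lt[OF p] ab by auto
  define x where "x = dl b"
  define y where "y = (\<lambda>j. m * dl a j)"
  define e where "e = (\<lambda>q::nat\<times>nat. if q = p then m else 0)"
  have xZ: "x \<in> Zn n" "y \<in> Zn n" "(\<lambda>j. x j + y j) \<in> Zn n" using ab2 by (auto simp: x_def y_def dl_def Zn_def)
  have cx: "(x, \<lambda>_. 0) \<in> carrier (G_Gamma n E)" and cy: "(y, \<lambda>_. 0) \<in> carrier (G_Gamma n E)"
    and cxy: "((\<lambda>j. x j + y j), \<lambda>_. 0) \<in> carrier (G_Gamma n E)"
    and ce: "((\<lambda>_. 0), e) \<in> carrier (G_Gamma n E)"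
    using xZ p by (auto simp: carrier_iff e_def Zn_def)
  have e1: "(\<lambda>q. if q \<in> nonedges n E then x (snd q) * y (fst q) else 0) = e"
  proof (rule ext)
    fix q :: "nat \<times> nat"
    show "(if q \<in> nonedges n E then x (snd q) * y (fst q) else 0) = e q"
      using p ab by (cases q) (auto simp: x_def y_def dl_def e_def)
  qed
  have m1: "G_mult n E (x, \<lambda>_. 0) (y, \<lambda>_. 0) = G_mult n E ((\<lambda>j. x j + y j), \<lambda>_. 0) ((\<lambda>_. 0), e)"
    unfolding Gm_xy Gm_z0 e1 ..
  have e2: "(\<lambda>q. if q \<in> nonedges n E then y (snd q) * x (fst q) else 0) = (\<lambda>_. 0)"
  proof (rule ext)
    fix q :: "nat \<times> nat"
    show "(if q \<in> nonedges n E then y (snd q) * x (fst q) else 0) = 0"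
      using ab2 nonedges_lt[of q n E] by (cases q) (auto simp: x_def y_def dl_def)
  qed
  have m2: "G_mult n E (y, \<lambda>_. 0) (x, \<lambda>_. 0) = ((\<lambda>j. x j + y j), \<lambda>_. 0)"
    unfolding Gm_xy e2 by (simp add: add.commute)
  have "fst (f (G_mult n E (x, \<lambda>_. 0) (y, \<lambda>_. 0))) j = fst (f ((\<lambda>j. x j + y j), \<lambda>_. 0)) j + fst (f ((\<lambda>_. 0), e)) j"
    unfolding m1 by (rule Fadd[OF f cxy ce])
  moreover have "fst (f (G_mult n E (x, \<lambda>_. 0) (y, \<lambda>_. 0))) j = fst (f (x, \<lambda>_. 0)) j + fst (f (y, \<lambda>_. 0)) j"
    by (rule Fadd[OF f cx cy])
  moreover have "fst (f (G_mult n E (y, \<lambda>_. 0) (x, \<lambda>_. 0))) j = fst (f (y, \<lambda>_. 0)) j + fst (f (x, \<lambda>_. 0)) j"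
    by (rule Fadd[OF f cy cx])
  ultimately show ?thesis unfolding m2 e_def by simp
qed

lemma F0:
  assumes f: "f \<in> hom (G_Gamma n E) (G_Gamma n E)" and t: "\<forall>p. p \<notin> nonedges n E \<longrightarrow> t p = 0"
  shows "fst (f ((\<lambda>_. 0), t)) j = 0"
proof -
  have fin: "finite (nonedges n E)"
    by (rule finite_subset[of _ "{..<n} \<times> {..<n}"]) (auto simp: nonedges_def)
  have "\<forall>j. fst (f ((\<lambda>_. 0), (\<lambda>q. if q \<in> S then t q else 0))) j = 0" if "S \<subseteq> nonedges n E" for S
    using finite_subset[OF that fin] that
  proof (induct S rule: finite_induct)
    case empty
    then show ?case using F00[OF f] by simp
  next
    case (insert p S)
    show ?case
    proof
      fix j
      have pN: "p \<in> nonedges n E" using insert by auto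
      have c1: "((\<lambda>_. 0), (\<lambda>q. if q \<in> S then t q else 0)) \<in> carrier (G_Gamma n E)"
        using insert(4) by (auto simp: carrier_iff Zn_def)
      have c2: "((\<lambda>_. 0), (\<lambda>q. if q = p then t p else 0)) \<in> carrier (G_Gamma n E)"
        using pN by (auto simp: carrier_iff Zn_def)
      have eq: "G_mult n E ((\<lambda>_. 0), (\<lambda>q. if q \<in> S then t q else 0)) ((\<lambda>_. 0), (\<lambda>q. if q = p then t p else 0))
          = ((\<lambda>_. 0), (\<lambda>q. if q \<in> insert p S then t q else 0))"
        unfolding Gm_00 using insert(2) by (auto simp: fun_eq_iff)
      have "fst (f ((\<lambda>_. 0), (\<lambda>q. if q \<in> insert p S then t q else 0))) j =
            fst (f ((\<lambda>_. 0), (\<lambda>q. if q \<in> S then t q else 0))) j + fst (f ((\<lambda>_. 0), (\<lambda>q. if q = p then t p else 0))) j"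
        unfolding eq[symmetric] by (rule Fadd[OF f c1 c2])
      then show "fst (f ((\<lambda>_. 0), (\<lambda>q. if q \<in> insert p S then t q else 0))) j = 0"
        using insert(3) insert(4) F0e[OF f pN, of "t p" j] by simp
    qed
  qed
  from this[OF order_refl] have "fst (f ((\<lambda>_. 0), (\<lambda>q. if q \<in> nonedges n E then t q else 0))) j = 0" by blast
  moreover have "(\<lambda>q. if q \<in> nonedges n E then t q else 0) = t" using t by (auto simp: fun_eq_iff)
  ultimately show ?thesis by simp
qed

lemma Fzt:
  assumes f: "f \<in> hom (G_Gamma n E) (G_Gamma n E)" and c: "(z, t) \<in> carrier (G_Gamma n E)"
  shows "fst (f (z, t)) = Lm f z"
proof
  fix j
  have c1: "(z, \<lambda>_. 0) \<in> carrier (G_Gamma n E)" and c2: "((\<lambda>_. 0), t) \<in> carrier (G_Gamma n E)"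
    using c by (auto simp: carrier_iff Zn_def)
  have "fst (f (G_mult n E (z, \<lambda>_. 0) ((\<lambda>_. 0), t))) j = fst (f (z, \<lambda>_. 0)) j + fst (f ((\<lambda>_. 0), t)) j"
    by (rule Fadd[OF f c1 c2])
  then show "fst (f (z, t)) j = Lm f z j"
    unfolding Gm_z0 Lm_def using F0[OF f] c by (simp add: carrier_iff)
qed

lemma Ladd:
  assumes f: "f \<in> hom (G_Gamma n E) (G_Gamma n E)" and x: "x \<in> Zn n" and y: "y \<in> Zn n"
  shows "Lm f (\<lambda>j. x j + y j) j = Lm f x j + Lm f y j"
proof -
  have cx: "(x, \<lambda>_. 0) \<in> carrier (G_Gamma n E)" and cy: "(y, \<lambda>_. 0) \<in> carrier (G_Gamma n E)"
    using x y by (auto simp: carrier_iff)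
  have cxy: "G_mult n E (x, \<lambda>_. 0) (y, \<lambda>_. 0) \<in> carrier (G_Gamma n E)"
    using x y unfolding Gm_xy by (auto simp: carrier_iff Zn_def)
  have "fst (f (G_mult n E (x, \<lambda>_. 0) (y, \<lambda>_. 0))) j = Lm f x j + Lm f y j"
    using Fadd[OF f cx cy] by (simp add: Lm_def)
  moreover have "fst (f (G_mult n E (x, \<lambda>_. 0) (y, \<lambda>_. 0))) = Lm f (\<lambda>j. x j + y j)"
    using Fzt[OF f cxy[unfolded Gm_xy]] unfolding Gm_xy .
  ultimately show ?thesis by simp
qed

lemma LZn:
  assumes f: "f \<in> hom (G_Gamma n E) (G_Gamma n E)" and z: "z \<in> Zn n"
  shows "Lm f z \<in> Zn n"
proof -
  have "(z, \<lambda>_. 0) \<in> carrier (G_Gamma n E)" using z by (auto simp: carrier_iff)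
  then have "f (z, \<lambda>_. 0) \<in> carrier (G_Gamma n E)" by (rule hom_carrier[OF f])
  then show ?thesis by (simp add: carrier_iff Lm_def)
qed

lemma L0:
  assumes f: "f \<in> hom (G_Gamma n E) (G_Gamma n E)"
  shows "Lm f (\<lambda>_. 0) i = 0"
proof -
  have z: "(\<lambda>_. 0::int) \<in> Zn n" by (simp add: Zn_def)
  have "Lm f (\<lambda>j. (\<lambda>_. 0::int) j + (\<lambda>_. 0) j) i = Lm f (\<lambda>_. 0) i + Lm f (\<lambda>_. 0) i"
    by (rule Ladd[OF f z z])
  then show ?thesis by simp
qed

lemma Lneg:
  assumes f: "f \<in> hom (G_Gamma n E) (G_Gamma n E)" and z: "z \<in> Zn n"
  shows "Lm f (\<lambda>j. - z j) i = - Lm f z i"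
proof -
  have z': "(\<lambda>j. - z j) \<in> Zn n" using z by (simp add: Zn_def)
  have "Lm f (\<lambda>j. z j + (\<lambda>j. - z j) j) i = Lm f z i + Lm f (\<lambda>j. - z j) i"
    by (rule Ladd[OF f z z'])
  then show ?thesis using L0[OF f, of i] by simp
qed

lemma Lnat:
  assumes f: "f \<in> hom (G_Gamma n E) (G_Gamma n E)" and z: "z \<in> Zn n"
  shows "Lm f (\<lambda>j. int k * z j) i = int k * Lm f z i"
proof (induct k)
  case 0
  then show ?case using L0[OF f] by simp
next
  case (Suc k)
  have z': "(\<lambda>j. int k * z j) \<in> Zn n" using z by (simp add: Zn_def)
  have "Lm f (\<lambda>j. (\<lambda>j. int k * z j) j + z j) i = Lm f (\<lambda>j. int k * z j) i + Lm f z i"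
    by (rule Ladd[OF f z' z])
  moreover have "(\<lambda>j. (\<lambda>j. int k * z j) j + z j) = (\<lambda>j. int (Suc k) * z j)"
    by (auto simp: fun_eq_iff algebra_simps)
  ultimately show ?case using Suc by (simp add: algebra_simps)
qed

lemma Lsmul:
  assumes f: "f \<in> hom (G_Gamma n E) (G_Gamma n E)" and z: "z \<in> Zn n"
  shows "Lm f (\<lambda>j. m * z j) i = m * Lm f z i"
proof (cases "m \<ge> 0")
  case True
  then obtain k where "m = int k" using nonneg_int_cases by blast
  then show ?thesis using Lnat[OF f z] by simp
next
  case False
  define k where "k = nat (- m)"
  have k: "m = - int k" using False by (simp add: k_def)
  have z': "(\<lambda>j. int k * z j) \<in> Zn n" using z by (simp add: Zn_def)
  have "Lm f (\<lambda>j. - (\<lambda>j. int k * z j) j) i = - Lm f (\<lambda>j. int k * z j) i"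
    by (rule Lneg[OF f z'])
  then show ?thesis using Lnat[OF f z, of k i] k by simp
qed

lemma sum_dl:
  assumes "w < n"
  shows "(\<Sum>k<n. dl w k * X k) = (X w :: int)"
proof -
  have "(\<Sum>k<n. dl w k * X k) = (\<Sum>k<n. if w = k then X k else 0)"
    by (rule sum.cong) (auto simp: dl_def)
  also have "\<dots> = X w" using assms by simp
  finally show ?thesis .
qed

lemma lin:
  assumes f: "f \<in> hom (G_Gamma n E) (G_Gamma n E)" and z: "z \<in> Zn n"
  shows "Lm f z i = (\<Sum>k<n. z k * Mx f i k)"
proof -
  have "m \<le> n \<Longrightarrow> Lm f (\<lambda>j. if j < m then z j else 0) i = (\<Sum>k<m. z k * Mx f i k)" for m
  proof (induct m)
    case 0
    then show ?case using L0[OF f] by simp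
  next
    case (Suc m)
    have t1: "(\<lambda>j. if j < m then z j else 0) \<in> Zn n" using Suc(2) by (auto simp: Zn_def)
    have t2: "(\<lambda>j. z m * dl m j) \<in> Zn n" using Suc(2) by (auto simp: Zn_def dl_def)
    have d: "dl m \<in> Zn n" using Suc(2) by (auto simp: Zn_def dl_def)
    have "Lm f (\<lambda>j. (\<lambda>j. if j < m then z j else 0) j + (\<lambda>j. z m * dl m j) j) i
        = Lm f (\<lambda>j. if j < m then z j else 0) i + Lm f (\<lambda>j. z m * dl m j) i"
      by (rule Ladd[OF f t1 t2])
    moreover have "(\<lambda>j. (\<lambda>j. if j < m then z j else 0) j + (\<lambda>j. z m * dl m j) j) = (\<lambda>j. if j < Suc m then z j else 0)"
    proof (rule ext)
      fix j
      show "(if j < m then z j else 0) + z m * dl m j = (if j < Suc m then z j else 0)"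
        by (cases "j < m"; cases "j = m") (auto simp: dl_def)
    qed
    moreover have "Lm f (\<lambda>j. z m * dl m j) i = z m * Mx f i m" using Lsmul[OF f d] by (simp add: Mx_def)
    ultimately show ?case using Suc by simp
  qed
  from this[OF order_refl] have "Lm f (\<lambda>j. if j < n then z j else 0) i = (\<Sum>k<n. z k * Mx f i k)" .
  moreover have "(\<lambda>j. if j < n then z j else 0) = z" using z by (auto simp: fun_eq_iff Zn_def)
  ultimately show ?thesis by simp
qed

definition pair_ok :: "nat \<Rightarrow> (nat \<Rightarrow> nat \<Rightarrow> bool) \<Rightarrow> (elt \<Rightarrow> elt) \<Rightarrow> (elt \<Rightarrow> elt) \<Rightarrow> bool" where
  "pair_ok n E f g \<longleftrightarrow> f \<in> hom (G_Gamma n E) (G_Gamma n E) \<and> g \<in> hom (G_Gamma n E) (G_Gamma n E) \<and>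
     (\<forall>a\<in>carrier (G_Gamma n E). g (f a) = a) \<and> (\<forall>a\<in>carrier (G_Gamma n E). f (g a) = a)"

lemma pair_ok_sym: "pair_ok n E f g \<Longrightarrow> pair_ok n E g f"
  unfolding pair_ok_def by auto

lemma LgLf:
  assumes ok: "pair_ok n E f g" and z: "z \<in> Zn n"
  shows "Lm g (Lm f z) = z"
proof -
  have f: "f \<in> hom (G_Gamma n E) (G_Gamma n E)" and g: "g \<in> hom (G_Gamma n E) (G_Gamma n E)"
    using ok unfolding pair_ok_def by auto
  have c: "(z, \<lambda>_. 0) \<in> carrier (G_Gamma n E)" using z by (simp add: carrier_iff)
  have c2: "f (z, \<lambda>_. 0) \<in> carrier (G_Gamma n E)" by (rule hom_carrier[OF f c])
  have gf: "g (f (z, \<lambda>_. 0)) = (z, \<lambda>_. 0)" using ok c unfolding pair_ok_def by blast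
  have eq: "f (z, \<lambda>_. 0) = (Lm f z, snd (f (z, \<lambda>_. 0)))" by (simp add: Lm_def)
  have c3: "(Lm f z, snd (f (z, \<lambda>_. 0))) \<in> carrier (G_Gamma n E)" using c2 eq by simp
  have "fst (g (Lm f z, snd (f (z, \<lambda>_. 0)))) = Lm g (Lm f z)"
    by (rule Fzt[OF g c3])
  then have "fst (g (f (z, \<lambda>_. 0))) = Lm g (Lm f z)" using eq by simp
  then show ?thesis using gf by simp
qed

lemma dlZ: "u < n \<Longrightarrow> dl u \<in> Zn n"
  by (auto simp: dl_def Zn_def)

lemma MxZ:
  assumes f: "f \<in> hom (G_Gamma n E) (G_Gamma n E)" and u: "u < n" and nz: "Mx f i u \<noteq> 0"
  shows "i < n"
proof (rule ccontr)
  assume "\<not> i < n"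
  then have "Lm f (dl u) i = 0" using LZn[OF f dlZ[OF u]] unfolding Zn_def by simp
  then show False using nz unfolding Mx_def by simp
qed

lemma sum_id:
  assumes ok: "pair_ok n E f g" and u: "u < n"
  shows "(\<Sum>k<n. Mx f k u * Mx g j k) = dl u j"
proof -
  have f: "f \<in> hom (G_Gamma n E) (G_Gamma n E)" and g: "g \<in> hom (G_Gamma n E) (G_Gamma n E)"
    using ok unfolding pair_ok_def by auto
  have "Lm g (Lm f (dl u)) j = (\<Sum>k<n. Lm f (dl u) k * Mx g j k)"
    by (rule lin[OF g LZn[OF f dlZ[OF u]]])
  then show ?thesis using LgLf[OF ok dlZ[OF u]] by (simp add: Mx_def)
qed

lemma indep:
  assumes ok: "pair_ok n E f g" and u: "u < n" and w: "w < n" and uw: "u \<noteq> w" and a: "\<alpha> \<noteq> 0"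
    and h: "\<forall>b. \<alpha> * Mx f b w = \<beta> * Mx f b u"
  shows False
proof -
  have f: "f \<in> hom (G_Gamma n E) (G_Gamma n E)" and g: "g \<in> hom (G_Gamma n E) (G_Gamma n E)"
    using ok unfolding pair_ok_def by auto
  define z where "z = (\<lambda>j. \<alpha> * dl w j - \<beta> * dl u j)"
  have zZ: "z \<in> Zn n" using u w by (auto simp: z_def Zn_def dl_def)
  have "Lm f z b = 0" for b
  proof -
    have "Lm f z b = (\<Sum>k<n. z k * Mx f b k)" by (rule lin[OF f zZ])
    also have "\<dots> = \<alpha> * (\<Sum>k<n. dl w k * Mx f b k) - \<beta> * (\<Sum>k<n. dl u k * Mx f b k)"
    proof -
      have "\<And>k. z k * Mx f b k = \<alpha> * (dl w k * Mx f b k) - \<beta> * (dl u k * Mx f b k)"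
        unfolding z_def by (simp add: left_diff_distrib mult.assoc)
      then show ?thesis by (simp add: sum_subtractf sum_distrib_left)
    qed
    also have "\<dots> = \<alpha> * Mx f b w - \<beta> * Mx f b u"
      unfolding sum_dl[OF w, of "\<lambda>k. Mx f b k"] sum_dl[OF u, of "\<lambda>k. Mx f b k"] ..
    also have "\<dots> = 0" using h[rule_format, of b] by simp
    finally show ?thesis .
  qed
  then have L: "Lm f z = (\<lambda>_. 0)" by (rule ext)
  from LgLf[OF ok zZ] have "Lm g (\<lambda>_. 0) = z" unfolding L .
  then have "z w = 0" using L0[OF g, of w] by simp
  then show False using uw a by (simp add: z_def dl_def)
qed

lemma sg_lt: "simple_graph n E \<Longrightarrow> E u v \<Longrightarrow> u < n \<and> v < n"
  unfolding simple_graph_def by blast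
lemma sg_sym: "simple_graph n E \<Longrightarrow> E u v \<Longrightarrow> E v u"
  unfolding simple_graph_def by blast
lemma sg_irr: "simple_graph n E \<Longrightarrow> \<not> E u u"
  unfolding simple_graph_def by blast

lemma Pint:
  assumes f: "f \<in> hom (G_Gamma n E) (G_Gamma n E)" and sg: "simple_graph n E" and Euv: "E u v"
    and a: "a < n" and b: "b < n" and ab: "a \<noteq> b" and nE: "\<not> E a b"
  shows "Mx f a u * Mx f b v = Mx f a v * Mx f b u"
proof -
  have uv: "u < n" "v < n" using sg_lt[OF sg Euv] by auto
  have cu: "(dl u, \<lambda>_. 0) \<in> carrier (G_Gamma n E)" and cv: "(dl v, \<lambda>_. 0) \<in> carrier (G_Gamma n E)"
    using uv by (auto simp: carrier_iff dlZ)
  have z1: "(\<lambda>q. if q \<in> nonedges n E then dl u (snd q) * dl v (fst q) else 0) = (\<lambda>_. 0)"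
  proof (rule ext)
    fix q :: "nat \<times> nat"
    show "(if q \<in> nonedges n E then dl u (snd q) * dl v (fst q) else 0) = 0"
      using Euv sg_sym[OF sg Euv] by (cases q) (auto simp: dl_def nonedges_def)
  qed
  have z2: "(\<lambda>q. if q \<in> nonedges n E then dl v (snd q) * dl u (fst q) else 0) = (\<lambda>_. 0)"
  proof (rule ext)
    fix q :: "nat \<times> nat"
    show "(if q \<in> nonedges n E then dl v (snd q) * dl u (fst q) else 0) = 0"
      using Euv sg_sym[OF sg Euv] by (cases q) (auto simp: dl_def nonedges_def)
  qed
  have eqp: "G_mult n E (dl u, \<lambda>_. 0) (dl v, \<lambda>_. 0) = G_mult n E (dl v, \<lambda>_. 0) (dl u, \<lambda>_. 0)"
    unfolding Gm_xy z1 z2 by (simp add: add.commute)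
  define X where "X = f (dl u, \<lambda>_. 0)"
  define Y where "Y = f (dl v, \<lambda>_. 0)"
  have XY: "G_mult n E X Y = G_mult n E Y X"
    using hom_mult[OF f cu cv] hom_mult[OF f cv cu] eqp unfolding X_def Y_def by simp
  have fX: "fst X i = Mx f i u" and fY: "fst Y i = Mx f i v" for i
    unfolding X_def Y_def Mx_def Lm_def by simp_all
  define q where "q = (min a b, max a b)"
  have qN: "q \<in> nonedges n E"
    using a b ab nE sg_sym[OF sg, of a b] sg_sym[OF sg, of b a] unfolding q_def nonedges_def
    by (cases "a < b") (auto simp: min_def max_def)
  have "snd (G_mult n E X Y) q = snd (G_mult n E Y X) q" using XY by simp
  then have "fst X (snd q) * fst Y (fst q) = fst Y (snd q) * fst X (fst q)"
    using qN unfolding G_mult_def by simp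
  then have h: "Mx f (max a b) u * Mx f (min a b) v = Mx f (max a b) v * Mx f (min a b) u"
    unfolding fX fY q_def by simp
  show ?thesis
  proof (cases "a < b")
    case True
    then show ?thesis using h by (simp add: min_def max_def mult.commute)
  next
    case False
    then show ?thesis using h ab by (simp add: min_def max_def)
  qed
qed

definition Rl :: "nat \<Rightarrow> (nat \<Rightarrow> nat \<Rightarrow> bool) \<Rightarrow> nat \<Rightarrow> nat \<Rightarrow> bool" where
  "Rl n E = (\<lambda>a b. a \<in> V1 n E \<and> b \<in> V1 n E \<and> E a b)"

lemma comp_of_Rl: "comp_of n E v = {u \<in> V1 n E. (Rl n E)\<^sup>*\<^sup>* v u}"
  unfolding comp_of_def Rl_def by simp

lemma V1_E: "simple_graph n E \<Longrightarrow> E a b \<Longrightarrow> a \<in> V1 n E \<and> b \<in> V1 n E"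
  unfolding V1_def using sg_lt sg_sym by blast

lemma V1_lt: "v \<in> V1 n E \<Longrightarrow> v < n"
  unfolding V1_def by simp

lemma V1_nb: "simple_graph n E \<Longrightarrow> v \<in> V1 n E \<Longrightarrow> \<exists>w. E v w"
  unfolding V1_def using sg_sym by blast

lemma comp_self: "v \<in> V1 n E \<Longrightarrow> v \<in> comp_of n E v"
  unfolding comp_of_Rl by simp

lemma Rl_symp: "simple_graph n E \<Longrightarrow> symp (Rl n E)"
  unfolding Rl_def symp_def using sg_sym by blast

lemma comp_eq:
  assumes sg: "simple_graph n E" and u: "u \<in> comp_of n E v"
  shows "comp_of n E u = comp_of n E v"
proof -
  have vu: "(Rl n E)\<^sup>*\<^sup>* v u" using u unfolding comp_of_Rl by simp
  have uv: "(Rl n E)\<^sup>*\<^sup>* u v" using symp_rtranclp[OF Rl_symp[OF sg]] vu unfolding symp_def by blast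
  show ?thesis unfolding comp_of_Rl
    using vu uv by (auto intro: rtranclp_trans)
qed

lemma comp_edge:
  assumes sg: "simple_graph n E" and e: "E a b"
  shows "comp_of n E a = comp_of n E b"
proof -
  have "Rl n E a b" using V1_E[OF sg e] e unfolding Rl_def by simp
  then have "b \<in> comp_of n E a" using V1_E[OF sg e] unfolding comp_of_Rl by auto
  then show ?thesis using comp_eq[OF sg] by metis
qed

lemma comp_sub: "comp_of n E v \<subseteq> V1 n E"
  unfolding comp_of_Rl by auto

lemma comps_cases: "C \<in> components n E \<Longrightarrow> \<exists>v\<in>V1 n E. C = comp_of n E v"
  unfolding components_def by auto

lemma comps_sub: "C \<in> components n E \<Longrightarrow> C \<subseteq> V1 n E"
  using comps_cases comp_sub by blast

lemma comps_ne: "C \<in> components n E \<Longrightarrow> \<exists>v. v \<in> C"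
  using comps_cases comp_self by blast

lemma comp_in_comps: "v \<in> V1 n E \<Longrightarrow> comp_of n E v \<in> components n E"
  unfolding components_def by auto

lemma comp_disj:
  assumes sg: "simple_graph n E" and C: "C \<in> components n E" and D: "D \<in> components n E"
    and x: "x \<in> C" "x \<in> D"
  shows "C = D"
proof -
  obtain v w where v: "C = comp_of n E v" and w: "D = comp_of n E w"
    using comps_cases C D by blast
  have "comp_of n E x = C" using comp_eq[OF sg] x(1) v by simp
  moreover have "comp_of n E x = D" using comp_eq[OF sg] x(2) w by simp
  ultimately show ?thesis by simp
qed

lemma iso_pair_ok:
  assumes phi: "\<phi> \<in> iso (G_Gamma n E) (G_Gamma n E)"
  shows "pair_ok n E \<phi> (inv_into (carrier (G_Gamma n E)) \<phi>)"
proof -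
  let ?G = "G_Gamma n E"
  let ?g = "inv_into (carrier ?G) \<phi>"
  have hom: "\<phi> \<in> hom ?G ?G" and bij: "bij_betw \<phi> (carrier ?G) (carrier ?G)"
    using phi unfolding iso_def by auto
  have inj: "inj_on \<phi> (carrier ?G)" and img: "\<phi> ` carrier ?G = carrier ?G"
    using bij unfolding bij_betw_def by auto
  have gf: "\<forall>a\<in>carrier ?G. ?g (\<phi> a) = a" using inj by (simp add: inv_into_f_f)
  have fg: "\<forall>a\<in>carrier ?G. \<phi> (?g a) = a" using img by (simp add: f_inv_into_f)
  have gc: "\<And>a. a \<in> carrier ?G \<Longrightarrow> ?g a \<in> carrier ?G"
    using img by (metis inv_into_into)
  have closed: "\<And>a b. a \<in> carrier ?G \<Longrightarrow> b \<in> carrier ?G \<Longrightarrow> a \<otimes>\<^bsub>?G\<^esub> b \<in> carrier ?G"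
    unfolding mult_eq carrier_iff G_mult_def Zn_def by simp
  have ghom: "?g \<in> hom ?G ?G"
    unfolding hom_def
  proof (intro CollectI conjI ballI)
    show "?g \<in> carrier ?G \<rightarrow> carrier ?G" using gc by auto
    fix x y assume x: "x \<in> carrier ?G" and y: "y \<in> carrier ?G"
    have xy: "x \<otimes>\<^bsub>?G\<^esub> y \<in> carrier ?G" using closed x y .
    have c1: "?g (x \<otimes>\<^bsub>?G\<^esub> y) \<in> carrier ?G" using gc xy .
    have c2: "?g x \<otimes>\<^bsub>?G\<^esub> ?g y \<in> carrier ?G" using closed gc x y by blast
    have "\<phi> (?g x \<otimes>\<^bsub>?G\<^esub> ?g y) = \<phi> (?g x) \<otimes>\<^bsub>?G\<^esub> \<phi> (?g y)"
      using hom gc x y unfolding hom_def by blast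
    also have "\<dots> = x \<otimes>\<^bsub>?G\<^esub> y" using fg x y by simp
    also have "\<dots> = \<phi> (?g (x \<otimes>\<^bsub>?G\<^esub> y))" using fg xy by simp
    finally show "?g (x \<otimes>\<^bsub>?G\<^esub> y) = ?g x \<otimes>\<^bsub>?G\<^esub> ?g y"
      using inj c1 c2 unfolding inj_on_def by metis
  qed
  show ?thesis unfolding pair_ok_def using hom ghom gf fg by blast
qed

lemma okf: "pair_ok n E f g \<Longrightarrow> f \<in> hom (G_Gamma n E) (G_Gamma n E)"
  unfolding pair_ok_def by blast

lemma Mx_out:
  assumes ok: "pair_ok n E f g" and u: "u < n" and b: "\<not> b < n"
  shows "Mx f b u = 0"
  using MxZ[OF okf[OF ok] u] b by blast

lemma colnz:
  assumes ok: "pair_ok n E f g" and u: "u < n"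
  shows "\<exists>k. Mx f k u \<noteq> 0 \<and> Mx g u k \<noteq> 0"
proof (rule ccontr)
  assume "\<not> ?thesis"
  then have "(\<Sum>k<n. Mx f k u * Mx g u k) = 0" by (intro sum.neutral) auto
  moreover have "(\<Sum>k<n. Mx f k u * Mx g u k) = dl u u" by (rule sum_id[OF ok u])
  ultimately show False by (simp add: dl_def)
qed

lemma B1:
  assumes ok: "pair_ok n E f g" and sg: "simple_graph n E" and u: "u \<in> V1 n E" and nz: "Mx f i u \<noteq> 0"
  shows "i \<in> V1 n E"
proof (rule ccontr)
  assume ni: "i \<notin> V1 n E"
  have f: "f \<in> hom (G_Gamma n E) (G_Gamma n E)" using okf[OF ok] .
  have un: "u < n" using u V1_lt by blast
  have iN: "i < n" using MxZ[OF f un nz] .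
  have nEi: "\<And>b. \<not> E i b" using ni iN sg_sym[OF sg] unfolding V1_def by blast
  obtain w where w: "E u w" using V1_nb[OF sg u] by blast
  have wn: "w < n" using sg_lt[OF sg w] by simp
  have uw: "u \<noteq> w" using w sg_irr[OF sg] by blast
  have "\<forall>b. Mx f i u * Mx f b w = Mx f i w * Mx f b u"
  proof
    fix b
    show "Mx f i u * Mx f b w = Mx f i w * Mx f b u"
    proof (cases "b < n")
      case False
      then show ?thesis using Mx_out[OF ok un] Mx_out[OF ok wn] by simp
    next
      case True
      show ?thesis
      proof (cases "b = i")
        case True
        then show ?thesis by (simp add: mult.commute)
      next
        case False
        show ?thesis by (rule Pint[OF f sg w iN \<open>b < n\<close> _ nEi]) (use False in auto)
      qed
    qed
  qed
  then show False using indep[OF ok un wn uw nz] by blast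
qed

lemma B2:
  assumes ok: "pair_ok n E f g" and sg: "simple_graph n E" and u: "u \<in> V1 n E"
    and n1: "Mx f i1 u \<noteq> 0" and n2: "Mx f i2 u \<noteq> 0"
  shows "comp_of n E i1 = comp_of n E i2"
proof (rule ccontr)
  assume ne: "comp_of n E i1 \<noteq> comp_of n E i2"
  have f: "f \<in> hom (G_Gamma n E) (G_Gamma n E)" using okf[OF ok] .
  have un: "u < n" using u V1_lt by blast
  have i1n: "i1 < n" using MxZ[OF f un n1] .
  have i2n: "i2 < n" using MxZ[OF f un n2] .
  have i12: "i1 \<noteq> i2" using ne by blast
  have nE12: "\<not> E i1 i2" using ne comp_edge[OF sg] by blast
  have nE21: "\<not> E i2 i1" using nE12 sg_sym[OF sg] by blast
  have nocom: "\<And>b. E i1 b \<Longrightarrow> \<not> E i2 b"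
    using ne comp_edge[OF sg] by metis
  obtain w where w: "E u w" using V1_nb[OF sg u] by blast
  have wn: "w < n" using sg_lt[OF sg w] by simp
  have uw: "u \<noteq> w" using w sg_irr[OF sg] by blast
  have h2: "Mx f i2 u * Mx f i1 w = Mx f i2 w * Mx f i1 u"
    by (rule Pint[OF f sg w i2n i1n _ nE21]) (use i12 in auto)
  have "\<forall>b. Mx f i1 u * Mx f b w = Mx f i1 w * Mx f b u"
  proof
    fix b
    show "Mx f i1 u * Mx f b w = Mx f i1 w * Mx f b u"
    proof (cases "b < n")
      case False
      then show ?thesis using Mx_out[OF ok un] Mx_out[OF ok wn] by simp
    next
      case bn: True
      show ?thesis
      proof (cases "b = i1")
        case True
        then show ?thesis by (simp add: mult.commute)
      next
        case bi: False
        show ?thesis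
        proof (cases "E i1 b")
          case False
          show ?thesis by (rule Pint[OF f sg w i1n bn _ False]) (use bi in auto)
        next
          case True
          have b2: "b \<noteq> i2" using True nE12 by blast
          have nE2b: "\<not> E i2 b" using nocom[OF True] .
          have h1: "Mx f i2 u * Mx f b w = Mx f i2 w * Mx f b u"
            by (rule Pint[OF f sg w i2n bn _ nE2b]) (use b2 in auto)
          have "Mx f i2 u * (Mx f i1 u * Mx f b w) = Mx f i1 u * (Mx f i2 u * Mx f b w)"
            by (simp add: mult_ac)
          also have "\<dots> = Mx f i1 u * (Mx f i2 w * Mx f b u)" using h1 by simp
          also have "\<dots> = (Mx f i2 w * Mx f i1 u) * Mx f b u" by (simp add: mult_ac)
          also have "\<dots> = (Mx f i2 u * Mx f i1 w) * Mx f b u" using h2 by simp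
          also have "\<dots> = Mx f i2 u * (Mx f i1 w * Mx f b u)" by (simp add: mult_ac)
          finally show ?thesis using n2 by simp
        qed
      qed
    qed
  qed
  then show False using indep[OF ok un wn uw n1] by blast
qed

lemma B3:
  assumes ok: "pair_ok n E f g" and sg: "simple_graph n E" and w: "E u w"
    and ni: "Mx f i u \<noteq> 0" and nb: "Mx f b w \<noteq> 0"
  shows "comp_of n E b = comp_of n E i"
proof -
  have f: "f \<in> hom (G_Gamma n E) (G_Gamma n E)" using okf[OF ok] .
  have uV: "u \<in> V1 n E" and wV: "w \<in> V1 n E" using V1_E[OF sg w] by auto
  have un: "u < n" and wn: "w < n" using sg_lt[OF sg w] by auto
  have iN: "i < n" using MxZ[OF f un ni] .
  have bN: "b < n" using MxZ[OF f wn nb] .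
  show ?thesis
  proof (cases "b = i")
    case True then show ?thesis by simp
  next
    case bi: False
    show ?thesis
    proof (cases "E i b")
      case True
      then show ?thesis using comp_edge[OF sg True] by simp
    next
      case False
      have "Mx f i u * Mx f b w = Mx f i w * Mx f b u"
        by (rule Pint[OF f sg w iN bN _ False]) (use bi in auto)
      then have "Mx f b u \<noteq> 0" using ni nb by auto
      then show ?thesis using B2[OF ok sg uV ni] by simp
    qed
  qed
qed

lemma blk_comp:
  assumes ok: "pair_ok n E f g" and sg: "simple_graph n E" and v: "v \<in> V1 n E"
    and i0: "Mx f i0 v \<noteq> 0" and u: "u \<in> comp_of n E v" and nz: "Mx f i u \<noteq> 0"
  shows "comp_of n E i = comp_of n E i0"
proof -
  have R: "(Rl n E)\<^sup>*\<^sup>* v u" using u unfolding comp_of_Rl by simp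
  have "\<forall>i. Mx f i u \<noteq> 0 \<longrightarrow> comp_of n E i = comp_of n E i0"
    using R
  proof (induct rule: rtranclp_induct)
    case base
    then show ?case using B2[OF ok sg v _ i0] by blast
  next
    case (step y z)
    have yz: "E y z" using step(2) unfolding Rl_def by simp
    have yn: "y < n" using sg_lt[OF sg yz] by simp
    obtain r where r: "Mx f r y \<noteq> 0" using colnz[OF ok yn] by blast
    show ?case
    proof (intro allI impI)
      fix i assume "Mx f i z \<noteq> 0"
      then have "comp_of n E i = comp_of n E r" by (rule B3[OF ok sg yz r])
      then show "comp_of n E i = comp_of n E i0" using step(3) r by simp
    qed
  qed
  then show ?thesis using nz by blast
qed

definition blk :: "nat \<Rightarrow> (nat \<Rightarrow> nat \<Rightarrow> bool) \<Rightarrow> (elt \<Rightarrow> elt) \<Rightarrow> nat set \<Rightarrow> nat set \<Rightarrow> bool" where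
  "blk n E f C D \<longleftrightarrow> (\<forall>u\<in>C. \<forall>i. Mx f i u \<noteq> 0 \<longrightarrow> i \<in> D)"

lemma blk_ex:
  assumes ok: "pair_ok n E f g" and sg: "simple_graph n E" and C: "C \<in> components n E"
  shows "\<exists>D\<in>components n E. blk n E f C D"
proof -
  obtain v where v: "v \<in> V1 n E" "C = comp_of n E v" using comps_cases[OF C] by blast
  obtain i0 where i0: "Mx f i0 v \<noteq> 0" using colnz[OF ok V1_lt[OF v(1)]] by blast
  have i0V: "i0 \<in> V1 n E" using B1[OF ok sg v(1) i0] .
  have "blk n E f C (comp_of n E i0)"
    unfolding blk_def
  proof (intro ballI allI impI)
    fix u i assume u: "u \<in> C" and nz: "Mx f i u \<noteq> 0"
    have uV: "u \<in> V1 n E" using u v comp_sub by blast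
    have iV: "i \<in> V1 n E" using B1[OF ok sg uV nz] .
    have "comp_of n E i = comp_of n E i0" using blk_comp[OF ok sg v(1) i0 _ nz] u v(2) by simp
    then show "i \<in> comp_of n E i0" using comp_self[OF iV] by simp
  qed
  then show ?thesis using comp_in_comps[OF i0V] by blast
qed

lemma blk_uniq:
  assumes ok: "pair_ok n E f g" and sg: "simple_graph n E" and C: "C \<in> components n E"
    and D: "D \<in> components n E" and D': "D' \<in> components n E"
    and b: "blk n E f C D" and b': "blk n E f C D'"
  shows "D = D'"
proof -
  obtain v where v: "v \<in> C" using comps_ne[OF C] by blast
  have vn: "v < n" using v comps_sub[OF C] V1_lt by blast
  obtain i where i: "Mx f i v \<noteq> 0" using colnz[OF ok vn] by blast
  have "i \<in> D" "i \<in> D'" using b b' v i unfolding blk_def by auto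
  then show ?thesis using comp_disj[OF sg D D'] by blast
qed

definition Tm :: "nat \<Rightarrow> (nat \<Rightarrow> nat \<Rightarrow> bool) \<Rightarrow> (elt \<Rightarrow> elt) \<Rightarrow> nat set \<Rightarrow> nat set" where
  "Tm n E f C = (THE D. D \<in> components n E \<and> blk n E f C D)"

lemma Tm_prop:
  assumes ok: "pair_ok n E f g" and sg: "simple_graph n E" and C: "C \<in> components n E"
  shows "Tm n E f C \<in> components n E \<and> blk n E f C (Tm n E f C)"
proof -
  have "\<exists>!D. D \<in> components n E \<and> blk n E f C D"
    using blk_ex[OF ok sg C] blk_uniq[OF ok sg C] by blast
  then show ?thesis unfolding Tm_def by (rule theI')
qed

lemma Tm_inv:
  assumes ok: "pair_ok n E f g" and sg: "simple_graph n E" and C: "C \<in> components n E"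
  shows "Tm n E g (Tm n E f C) = C"
proof -
  have ok': "pair_ok n E g f" using pair_ok_sym[OF ok] .
  have T1: "Tm n E f C \<in> components n E" "blk n E f C (Tm n E f C)" using Tm_prop[OF ok sg C] by auto
  have T2: "Tm n E g (Tm n E f C) \<in> components n E" "blk n E g (Tm n E f C) (Tm n E g (Tm n E f C))"
    using Tm_prop[OF ok' sg T1(1)] by auto
  obtain v where v: "v \<in> C" using comps_ne[OF C] by blast
  have vn: "v < n" using v comps_sub[OF C] V1_lt by blast
  obtain k where k: "Mx f k v \<noteq> 0" "Mx g v k \<noteq> 0" using colnz[OF ok vn] by blast
  have "k \<in> Tm n E f C" using T1(2) v k(1) unfolding blk_def by blast
  then have "v \<in> Tm n E g (Tm n E f C)" using T2(2) k(2) unfolding blk_def by blast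
  then show ?thesis using comp_disj[OF sg T2(1) C] v by blast
qed



definition Amat :: "(elt \<Rightarrow> elt) \<Rightarrow> nat \<Rightarrow> nat \<Rightarrow> rat" where
  "Amat f = (\<lambda>a u. rat_of_int (Mx f a u))"

lemma H_sub_iff: "a \<in> H_sub n E C \<longleftrightarrow> a \<in> carrier (G_Gamma n E) \<and> (\<forall>j. fst a j \<noteq> 0 \<longrightarrow> j \<in> C)"
  unfolding H_sub_def by simp

lemma Hsub_sub:
  assumes ok: "pair_ok n E f g" and sg: "simple_graph n E" and C: "C \<in> components n E"
    and a: "a \<in> H_sub n E C"
  shows "f a \<in> H_sub n E (Tm n E f C)"
proof -
  have f: "f \<in> hom (G_Gamma n E) (G_Gamma n E)" using okf[OF ok] .
  have ac: "a \<in> carrier (G_Gamma n E)" and asup: "\<And>j. fst a j \<noteq> 0 \<Longrightarrow> j \<in> C"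
    using a unfolding H_sub_iff by auto
  have fac: "f a \<in> carrier (G_Gamma n E)" using hom_carrier[OF f ac] .
  have ac2: "(fst a, snd a) \<in> carrier (G_Gamma n E)" using ac by simp
  have fst_fa: "fst (f a) = Lm f (fst a)" using Fzt[OF f ac2] by simp
  have za: "fst a \<in> Zn n" using ac by (simp add: carrier_iff)
  have bl: "blk n E f C (Tm n E f C)" using Tm_prop[OF ok sg C] by blast
  have "j \<in> Tm n E f C" if nz: "fst (f a) j \<noteq> 0" for j
  proof -
    have "(\<Sum>k<n. fst a k * Mx f j k) \<noteq> 0" using nz lin[OF f za, of j] fst_fa by simp
    then obtain k where k: "fst a k * Mx f j k \<noteq> 0"
    proof -
      assume hyp: "(\<Sum>k<n. fst a k * Mx f j k) \<noteq> 0" and th: "\<And>k. fst a k * Mx f j k \<noteq> 0 \<Longrightarrow> thesis"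
      show thesis
      proof (rule ccontr)
        assume "\<not> thesis"
        then have "\<forall>k\<in>{..<n}. fst a k * Mx f j k = 0" using th by blast
        then have "(\<Sum>k<n. fst a k * Mx f j k) = 0" by (rule sum.neutral)
        then show False using hyp by simp
      qed
    qed
    then have "k \<in> C" "Mx f j k \<noteq> 0" using asup by auto
    then show ?thesis using bl unfolding blk_def by blast
  qed
  then show ?thesis unfolding H_sub_iff using fac by blast
qed

lemma Hsub_img:
  assumes ok: "pair_ok n E f g" and sg: "simple_graph n E" and C: "C \<in> components n E"
  shows "f ` H_sub n E C = H_sub n E (Tm n E f C)"
proof
  show "f ` H_sub n E C \<subseteq> H_sub n E (Tm n E f C)" using Hsub_sub[OF ok sg C] by blast
  show "H_sub n E (Tm n E f C) \<subseteq> f ` H_sub n E C"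
  proof
    fix b assume b: "b \<in> H_sub n E (Tm n E f C)"
    have ok': "pair_ok n E g f" using pair_ok_sym[OF ok] .
    have D: "Tm n E f C \<in> components n E" using Tm_prop[OF ok sg C] by blast
    have "g b \<in> H_sub n E (Tm n E g (Tm n E f C))" by (rule Hsub_sub[OF ok' sg D b])
    then have gb: "g b \<in> H_sub n E C" using Tm_inv[OF ok sg C] by simp
    have "f (g b) = b" using ok b unfolding pair_ok_def H_sub_iff by blast
    then show "b \<in> f ` H_sub n E C" using gb by (rule image_eqI[OF sym])
  qed
qed

lemma comps_lt: "C \<in> components n E \<Longrightarrow> C \<subseteq> {..<n}"
  using comps_sub V1_lt by blast

lemma comps_fin:
  assumes "C \<in> components n E" shows "finite C"
proof -
  have "C \<subseteq> {..<n}" using comps_lt[OF assms] .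
  moreover have "finite {..<n}" by simp
  ultimately show ?thesis by (rule finite_subset)
qed

lemma sum_restr:
  assumes ok: "pair_ok n E f g" and sg: "simple_graph n E" and C: "C \<in> components n E"
    and l: "l \<in> C"
  shows "(\<Sum>k\<in>Tm n E f C. Mx f k l * Mx g j k) = dl l j"
proof -
  have D: "Tm n E f C \<in> components n E" and bl: "blk n E f C (Tm n E f C)"
    using Tm_prop[OF ok sg C] by auto
  have ln: "l < n" using l comps_lt[OF C] by auto
  have "(\<Sum>k\<in>Tm n E f C. Mx f k l * Mx g j k) = (\<Sum>k<n. Mx f k l * Mx g j k)"
  proof (rule sum.mono_neutral_left)
    show "finite {..<n}" by simp
    show "Tm n E f C \<subseteq> {..<n}" using comps_lt[OF D] .
    show "\<forall>k\<in>{..<n} - Tm n E f C. Mx f k l * Mx g j k = 0"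
      using bl l unfolding blk_def by auto
  qed
  also have "\<dots> = dl l j" by (rule sum_id[OF ok ln])
  finally show ?thesis .
qed

lemma invp_blk:
  assumes ok: "pair_ok n E f g" and sg: "simple_graph n E" and C: "C \<in> components n E"
  shows "invp (Tm n E f C) C (Amat f) (Amat g)"
proof -
  have ok': "pair_ok n E g f" using pair_ok_sym[OF ok] .
  have D: "Tm n E f C \<in> components n E" using Tm_prop[OF ok sg C] by blast
  have TT: "Tm n E g (Tm n E f C) = C" using Tm_inv[OF ok sg C] .
  have P1: "(\<Sum>k\<in>C. Amat f i k * Amat g k l) = (if i = l then 1 else 0)"
    if i: "i \<in> Tm n E f C" and l: "l \<in> Tm n E f C" for i l
  proof -
    have "(\<Sum>k\<in>Tm n E g (Tm n E f C). Mx g k l * Mx f i k) = dl l i"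
      by (rule sum_restr[OF ok' sg D l])
    then have s: "(\<Sum>k\<in>C. Mx g k l * Mx f i k) = dl l i" using TT by simp
    have "(\<Sum>k\<in>C. Amat f i k * Amat g k l) = rat_of_int (\<Sum>k\<in>C. Mx g k l * Mx f i k)"
      unfolding Amat_def by (simp add: of_int_sum mult.commute)
    then show ?thesis using s by (simp add: dl_def)
  qed
  have P2: "(\<Sum>k\<in>Tm n E f C. Amat g j k * Amat f k l) = (if j = l then 1 else 0)"
    if j: "j \<in> C" and l: "l \<in> C" for j l
  proof -
    have s: "(\<Sum>k\<in>Tm n E f C. Mx f k l * Mx g j k) = dl l j" by (rule sum_restr[OF ok sg C l])
    have "(\<Sum>k\<in>Tm n E f C. Amat g j k * Amat f k l) = rat_of_int (\<Sum>k\<in>Tm n E f C. Mx f k l * Mx g j k)"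
      unfolding Amat_def by (simp add: of_int_sum mult.commute)
    then show ?thesis using s by (simp add: dl_def)
  qed
  show ?thesis unfolding invp_def
  proof (intro conjI ballI)
    fix i l assume "i \<in> Tm n E f C" "l \<in> Tm n E f C"
    then show "(\<Sum>k\<in>C. Amat f i k * Amat g k l) = (if i = l then 1 else 0)" by (rule P1)
  next
    fix j l assume "j \<in> C" "l \<in> C"
    then show "(\<Sum>k\<in>Tm n E f C. Amat g j k * Amat f k l) = (if j = l then 1 else 0)" by (rule P2)
  qed
qed

lemma Pcond_blk:
  assumes ok: "pair_ok n E f g" and sg: "simple_graph n E" and R: "R \<subseteq> {..<n}"
  shows "Pcond E C R (Amat f)"
  unfolding Pcond_def
proof (intro ballI impI allI)
  fix u v a b assume u: "u \<in> C" and v: "v \<in> C" and e: "E u v" and a: "a \<in> R" and b: "b \<in> R"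
    and ab: "a \<noteq> b" and ne: "\<not> E a b"
  have "Mx f a u * Mx f b v = Mx f a v * Mx f b u"
    by (rule Pint[OF okf[OF ok] sg e _ _ ab ne]) (use a b R in auto)
  then have "rat_of_int (Mx f a u * Mx f b v) = rat_of_int (Mx f a v * Mx f b u)" by simp
  then show "Amat f a u * Amat f b v = Amat f a v * Amat f b u" unfolding Amat_def by simp
qed

lemma iso_comp:
  assumes ok: "pair_ok n E f g" and sg: "simple_graph n E" and C: "C \<in> components n E"
  shows "induced_iso E C (Tm n E f C)"
proof -
  have ok': "pair_ok n E g f" using pair_ok_sym[OF ok] .
  let ?D = "Tm n E f C"
  have D: "?D \<in> components n E" using Tm_prop[OF ok sg C] by blast
  have TT: "Tm n E g ?D = C" using Tm_inv[OF ok sg C] .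
  have fC: "finite C" and fD: "finite ?D" using comps_fin C D by auto
  have irr: "\<And>x. \<not> E x x" using sg_irr[OF sg] by blast
  have sy: "\<And>x y. E x y \<Longrightarrow> E y x" using sg_sym[OF sg] by blast
  have inv1: "invp ?D C (Amat f) (Amat g)" by (rule invp_blk[OF ok sg C])
  have inv2: "invp C ?D (Amat g) (Amat f)" using invp_blk[OF ok' sg D] TT by simp
  have P1: "Pcond E C ?D (Amat f)" by (rule Pcond_blk[OF ok sg comps_lt[OF D]])
  have P2: "Pcond E ?D C (Amat g)" by (rule Pcond_blk[OF ok' sg comps_lt[OF C]])
  note g1 = graph_iso[where E=E, OF fC fD inv1 P1 irr sy]
  note g2 = graph_iso[where E=E, OF fD fC inv2 P2 irr sy]
  have le1: "ecnt E C \<le> ecnt E ?D" using g1 by (rule conjunct1)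
  have le2: "ecnt E ?D \<le> ecnt E C" using g2 by (rule conjunct1)
  have eqc: "ecnt E C = ecnt E ?D" using le1 le2 by (rule antisym)
  have "\<exists>\<pi>. bij_betw \<pi> C ?D \<and> (\<forall>j\<in>C. Amat f (\<pi> j) j \<noteq> 0) \<and> (\<forall>u\<in>C. \<forall>v\<in>C. E u v \<longleftrightarrow> E (\<pi> u) (\<pi> v))"
    using g1[THEN conjunct2] eqc by (rule mp)
  then obtain \<pi> where "bij_betw \<pi> C ?D" "\<forall>u\<in>C. \<forall>v\<in>C. E u v \<longleftrightarrow> E (\<pi> u) (\<pi> v)"
    by blast
  then show ?thesis unfolding induced_iso_def by blast
qed

lemma Hsub_inj:
  assumes sg: "simple_graph n E" and C: "C \<in> components n E" and D: "D \<in> components n E"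
    and eq: "H_sub n E C = H_sub n E D"
  shows "C = D"
proof -
  obtain v where v: "v \<in> C" using comps_ne[OF C] by blast
  have vn: "v < n" using v comps_lt[OF C] by auto
  have dZ: "dl v \<in> Zn n" by (rule dlZ[OF vn])
  have "(dl v, \<lambda>_. 0) \<in> H_sub n E C"
    unfolding H_sub_iff carrier_iff using v dZ by (auto simp: dl_def)
  then have "(dl v, \<lambda>_. 0) \<in> H_sub n E D" using eq by simp
  then have "v \<in> D" unfolding H_sub_iff by (auto simp: dl_def)
  then show ?thesis using comp_disj[OF sg C D v] by blast
qed

theorem corollary6p2:
  fixes n k :: nat and E :: "nat \<Rightarrow> nat \<Rightarrow> bool" and Gc :: "nat \<Rightarrow> nat set"
    and \<phi> :: "(nat \<Rightarrow> int) \<times> (nat \<times> nat \<Rightarrow> int) \<Rightarrow> (nat \<Rightarrow> int) \<times> (nat \<times> nat \<Rightarrow> int)"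
  assumes "simple_graph n E"
    and "bij_betw Gc {1..k} (components n E)"
    and "\<phi> \<in> iso (G_Gamma n E) (G_Gamma n E)"
  shows "\<exists>!\<sigma>. \<sigma> permutes {1..k}
           \<and> (\<forall>i\<in>{1..k}. \<phi> ` H_sub n E (Gc i) = H_sub n E (Gc (\<sigma> i)))
           \<and> (\<forall>i\<in>{1..k}. induced_iso E (Gc i) (Gc (\<sigma> i)))"
proof -
  note sg = assms(1)
  define g where "g = inv_into (carrier (G_Gamma n E)) \<phi>"
  have ok: "pair_ok n E \<phi> g" unfolding g_def by (rule iso_pair_ok[OF assms(3)])
  have Gimg: "Gc ` {1..k} = components n E" and Ginj: "inj_on Gc {1..k}"
    using assms(2) unfolding bij_betw_def by auto
  let ?T = "Tm n E \<phi>"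
  define \<sigma> where "\<sigma> = (\<lambda>i. if i \<in> {1..k} then inv_into {1..k} Gc (?T (Gc i)) else i)"
  have Gc_in: "Gc i \<in> components n E" if "i \<in> {1..k}" for i using Gimg that by blast
  have TG: "?T (Gc i) \<in> Gc ` {1..k}" if "i \<in> {1..k}" for i
    using Tm_prop[OF ok sg Gc_in[OF that]] Gimg by simp
  have s_in: "\<sigma> i \<in> {1..k}" if i: "i \<in> {1..k}" for i
    unfolding \<sigma>_def using i inv_into_into[OF TG[OF i]] by simp
  have Gs: "Gc (\<sigma> i) = ?T (Gc i)" if i: "i \<in> {1..k}" for i
    unfolding \<sigma>_def using i f_inv_into_f[OF TG[OF i]] by simp
  have s_inj: "inj_on \<sigma> {1..k}"
  proof (rule inj_onI)
    fix i j assume i: "i \<in> {1..k}" and j: "j \<in> {1..k}" and e: "\<sigma> i = \<sigma> j"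
    have "?T (Gc i) = ?T (Gc j)" using Gs[OF i] Gs[OF j] e by simp
    then have "Tm n E g (?T (Gc i)) = Tm n E g (?T (Gc j))" by simp
    then have "Gc i = Gc j" using Tm_inv[OF ok sg Gc_in[OF i]] Tm_inv[OF ok sg Gc_in[OF j]] by simp
    then show "i = j" using Ginj i j unfolding inj_on_def by blast
  qed
  have s_img: "\<sigma> ` {1..k} = {1..k}"
    by (rule endo_inj_surj) (use s_in s_inj in auto)
  have s_out: "\<sigma> x = x" if h: "x \<notin> {1..k}" for x
    unfolding \<sigma>_def by (rule if_not_P[OF h])
  have perm: "\<sigma> permutes {1..k}"
  proof (rule bij_imp_permutes)
    show "bij_betw \<sigma> {1..k} {1..k}" using s_inj s_img unfolding bij_betw_def by blast
    show "\<And>x. x \<notin> {1..k} \<Longrightarrow> \<sigma> x = x" by (rule s_out)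
  qed
  have H: "\<forall>i\<in>{1..k}. \<phi> ` H_sub n E (Gc i) = H_sub n E (Gc (\<sigma> i))"
    using Hsub_img[OF ok sg Gc_in] Gs by simp
  have I: "\<forall>i\<in>{1..k}. induced_iso E (Gc i) (Gc (\<sigma> i))"
    using iso_comp[OF ok sg Gc_in] Gs by simp
  show ?thesis
  proof (rule ex1I[of _ \<sigma>])
    show "\<sigma> permutes {1..k} \<and> (\<forall>i\<in>{1..k}. \<phi> ` H_sub n E (Gc i) = H_sub n E (Gc (\<sigma> i)))
          \<and> (\<forall>i\<in>{1..k}. induced_iso E (Gc i) (Gc (\<sigma> i)))" using perm H I by blast
  next
    fix \<tau> assume t: "\<tau> permutes {1..k} \<and> (\<forall>i\<in>{1..k}. \<phi> ` H_sub n E (Gc i) = H_sub n E (Gc (\<tau> i)))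
          \<and> (\<forall>i\<in>{1..k}. induced_iso E (Gc i) (Gc (\<tau> i)))"
    show "\<tau> = \<sigma>"
    proof (rule ext)
      fix i
      show "\<tau> i = \<sigma> i"
      proof (cases "i \<in> {1..k}")
        case False
        then show ?thesis using t permutes_not_in[of \<tau> "{1..k}" i] s_out[OF False] by simp
      next
        case True
        have ti: "\<tau> i \<in> {1..k}" using t True permutes_in_image[of \<tau> "{1..k}" i] by blast
        have "H_sub n E (Gc (\<tau> i)) = H_sub n E (Gc (\<sigma> i))" using t H True by simp
        then have "Gc (\<tau> i) = Gc (\<sigma> i)"
          using Hsub_inj[OF sg Gc_in[OF ti] Gc_in[OF s_in[OF True]]] by simp
        then show ?thesis using Ginj ti s_in[OF True] unfolding inj_on_def by blast
      qed
    qed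
  qed
qed

end
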